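(* Let $k\ge 2$ be an integer. For every positive integer $n$, deterministically (for every realization), the random $k$-tree $G(n)$ has clustering coefficient at least $1/2$.
   Context: Random $k$-tree process: $G(0)$ is a clique on $k$ vertices; for $t\ge1$, $G(t)$ is obtained from $G(t-1)$ by choosing a $k$-clique of $G(t-1)$ uniformly at random, creating a new vertex, and joining it to all vertices of the chosen clique. The clustering coefficient of a graph $G$ is $cc(G)=\frac{1}{|V(G)|}\sum_{u\in V(G)}\frac{|\langle N(u)\rangle|}{\binom{\deg(u)}{2}}$, where $|\langle N(u)\rangle|$ is the number of edges $xy$ with both $x,y$ neighbors of $u$. *)

theory Defs
  imports Complex_Main
begin

text \<open>Simple graphs on natural-number vertices: a vertex set V and an edge set E
  of 2-element subsets of V.\<close>

definition is_clique :: "nat set set \<Rightarrow> nat set \<Rightarrow> bool" where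
  "is_clique E C \<longleftrightarrow> (\<forall>x\<in>C. \<forall>y\<in>C. x \<noteq> y \<longrightarrow> {x, y} \<in> E)"

text \<open>ktree k t V E: (V,E) is a possible realization of G(t) in the random k-tree process.\<close>

inductive ktree :: "nat \<Rightarrow> nat \<Rightarrow> nat set \<Rightarrow> nat set set \<Rightarrow> bool" for k :: nat where
  base: "ktree k 0 {0..<k} {e. e \<subseteq> {0..<k} \<and> card e = 2}"
| step: "\<lbrakk> ktree k t V E; C \<subseteq> V; card C = k; is_clique E C; v \<notin> V \<rbrakk>
         \<Longrightarrow> ktree k (Suc t) (insert v V) (E \<union> {{v, c} | c. c \<in> C})"

definition nbhd :: "nat set set \<Rightarrow> nat \<Rightarrow> nat set" where
  "nbhd E u = {w. {u, w} \<in> E}"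

definition clustering_coeff :: "nat set \<Rightarrow> nat set set \<Rightarrow> real" where
  "clustering_coeff V E =
     (1 / real (card V)) *
     (\<Sum>u\<in>V. real (card {e \<in> E. e \<subseteq> nbhd E u}) / real (card (nbhd E u) choose 2))"

end

theory Submission
  imports Defs
begin

lemma two_choose2: "2 * (n choose 2) = n * (n - 1)"
proof -
  have "even (n * (n - 1))" by (cases "even n") auto
  then show ?thesis by (simp only: choose_two dvd_mult_div_cancel)
qed

lemma card_pairs: "finite A \<Longrightarrow> 2 * card {B. B \<subseteq> A \<and> card B = 2} = card A * (card A - 1)"
  by (simp add: n_subsets two_choose2)

definition INV :: "nat \<Rightarrow> nat \<Rightarrow> nat set \<Rightarrow> nat set set \<Rightarrow> bool" where
  "INV k t V E \<longleftrightarrow> finite V \<and> card V = k + t \<and> (\<forall>e\<in>E. e \<subseteq> V \<and> card e = 2) \<and>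
    (\<forall>u\<in>V. 2 * card {e\<in>E. e \<subseteq> nbhd E u} = (k - 1) * (2 * card (nbhd E u) - k)
       \<and> k \<le> card (nbhd E u) + 1 \<and> (1 \<le> t \<longrightarrow> k \<le> card (nbhd E u))) \<and>
    (\<Sum>u\<in>V. card (nbhd E u)) = k * (k - 1) + 2 * k * t"

lemma nbhd_sub: "\<forall>e\<in>E. e \<subseteq> V \<and> card e = 2 \<Longrightarrow> nbhd E u \<subseteq> V - {u}"
  unfolding nbhd_def by (force)

lemma base_inv:
  assumes "k \<ge> 2"
  shows "INV k 0 {0..<k} {e. e \<subseteq> {0..<k} \<and> card e = 2}"
proof -
  let ?V = "{0..<k::nat}"
  let ?E = "{e. e \<subseteq> ?V \<and> card e = 2}"
  have nb: "nbhd ?E u = ?V - {u}" if "u \<in> ?V" for u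
    using that unfolding nbhd_def by (auto simp: card_2_iff)
  have ed: "{e\<in>?E. e \<subseteq> nbhd ?E u} = {e. e \<subseteq> ?V - {u} \<and> card e = 2}" if "u \<in> ?V" for u
    using nb[OF that] by auto
  have c: "card (nbhd ?E u) = k - 1" if "u \<in> ?V" for u
    using nb[OF that] that by simp
  have "2 * card {e\<in>?E. e \<subseteq> nbhd ?E u} = (k - 1) * (2 * card (nbhd ?E u) - k)" if "u \<in> ?V" for u
  proof -
    have "2 * card {e\<in>?E. e \<subseteq> nbhd ?E u} = (k-1) * (k - 1 - 1)"
      unfolding ed[OF that] using card_pairs[of "?V - {u}"] that by simp
    also have "\<dots> = (k - 1) * (2 * (k - 1) - k)" using assms by (simp add: algebra_simps)
    finally show ?thesis using c[OF that] by simp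
  qed
  moreover have "(\<Sum>u\<in>?V. card (nbhd ?E u)) = k * (k - 1)"
    using c by simp
  ultimately show ?thesis unfolding INV_def using c assms by auto
qed

lemma step_inv:
  assumes k2: "k \<ge> 2" and I: "INV k t V E" and CV: "C \<subseteq> V" and cC: "card C = k"
    and cl: "is_clique E C" and vV: "v \<notin> V"
  shows "INV k (Suc t) (insert v V) (E \<union> {{v, c} | c. c \<in> C})"
proof -
  define N where "N = {{v, c} | c. c \<in> C}"
  define E' where "E' = E \<union> N"
  from I have fV: "finite V" and cV: "card V = k + t" and eV: "\<forall>e\<in>E. e \<subseteq> V \<and> card e = 2"
    and loc: "\<forall>u\<in>V. 2 * card {e\<in>E. e \<subseteq> nbhd E u} = (k - 1) * (2 * card (nbhd E u) - k)
       \<and> k \<le> card (nbhd E u) + 1 \<and> (1 \<le> t \<longrightarrow> k \<le> card (nbhd E u))"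
    and sm: "(\<Sum>u\<in>V. card (nbhd E u)) = k * (k - 1) + 2 * k * t"
    unfolding INV_def by auto
  have fC: "finite C" using CV fV finite_subset by blast
  have vC: "v \<notin> C" using CV vV by blast
  have fE: "finite E" using eV fV by (metis Pow_iff finite_Pow_iff finite_subset subsetI)
  have nbV: "nbhd E u \<subseteq> V - {u}" for u using nbhd_sub[OF eV] .
  have fN: "finite (nbhd E u)" for u using nbV fV finite_subset by blast
  have nbv: "nbhd E v = {}" using nbV[of v] nbhd_def eV vV by (auto simp: nbhd_def)
  have nb': "nbhd E' w = nbhd E w \<union> (if w = v then C else {}) \<union> (if w \<in> C then {v} else {})" for w
    unfolding E'_def N_def nbhd_def using vC by (auto simp: doubleton_eq_iff)
  have nbv': "nbhd E' v = C" using nb'[of v] nbv vC by simp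
  have nbC': "nbhd E' w = insert v (nbhd E w)" if "w \<in> C" for w
    using nb'[of w] that vC by auto
  have nbO': "nbhd E' w = nbhd E w" if "w \<notin> C" "w \<noteq> v" for w
    using nb'[of w] that by auto
  have eV': "\<forall>e\<in>E'. e \<subseteq> insert v V \<and> card e = 2"
    unfolding E'_def N_def using eV CV vC by (auto simp: card_2_iff)
  have dC: "card (nbhd E' w) = card (nbhd E w) + 1" if "w \<in> C" for w
  proof -
    have "v \<notin> nbhd E w" using nbV vV by blast
    then show ?thesis using nbC'[OF that] fN by simp
  qed
  have cntv: "2 * card {e\<in>E'. e \<subseteq> nbhd E' v} = (k - 1) * (2 * card (nbhd E' v) - k)"
  proof -
    have "{e\<in>E'. e \<subseteq> C} = {e. e \<subseteq> C \<and> card e = 2}"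
    proof (intro equalityI subsetI)
      fix e assume "e \<in> {e\<in>E'. e \<subseteq> C}"
      then have e: "e \<in> E \<or> e \<in> N" "e \<subseteq> C" unfolding E'_def by auto
      have "e \<notin> N" using e(2) vC unfolding N_def by auto
      then show "e \<in> {e. e \<subseteq> C \<and> card e = 2}" using e eV by auto
    next
      fix e assume "e \<in> {e. e \<subseteq> C \<and> card e = 2}"
      then have e: "e \<subseteq> C" "card e = 2" by auto
      then obtain x y where xy: "e = {x, y}" "x \<noteq> y" by (auto simp: card_2_iff)
      then have "e \<in> E" using cl e(1) unfolding is_clique_def by auto
      then show "e \<in> {e\<in>E'. e \<subseteq> C}" using e(1) unfolding E'_def by auto
    qed
    then have "2 * card {e\<in>E'. e \<subseteq> nbhd E' v} = k * (k - 1)" unfolding nbv' using card_pairs[OF fC] cC by simp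
    then show ?thesis using nbv' cC by (simp add: mult.commute)
  qed
  have cntC: "2 * card {e\<in>E'. e \<subseteq> nbhd E' w} = (k - 1) * (2 * card (nbhd E' w) - k)"
    if wC: "w \<in> C" for w
  proof -
    have wV: "w \<in> V" using wC CV by blast
    have eq: "{e\<in>E'. e \<subseteq> nbhd E' w} = {e\<in>E. e \<subseteq> nbhd E w} \<union> (\<lambda>c. {v, c}) ` (C - {w})"
    proof -
      have "c \<in> nbhd E w" if "c \<in> C" "c \<noteq> w" for c
        using cl that wC unfolding is_clique_def nbhd_def by auto
      moreover have "w \<notin> nbhd E w" using nbV by blast
      ultimately have A: "c \<in> nbhd E w \<longleftrightarrow> c \<in> C - {w}" if "c \<in> C" for c
        using that by blast
      show ?thesis unfolding nbC'[OF wC]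
      proof (intro equalityI subsetI)
        fix e assume "e \<in> {e\<in>E'. e \<subseteq> insert v (nbhd E w)}"
        then have e: "e \<in> E \<or> e \<in> N" "e \<subseteq> insert v (nbhd E w)" unfolding E'_def by auto
        show "e \<in> {e\<in>E. e \<subseteq> nbhd E w} \<union> (\<lambda>c. {v, c}) ` (C - {w})"
        proof (cases "e \<in> E")
          case True
          then have "v \<notin> e" using eV vV by blast
          then show ?thesis using True e(2) by blast
        next
          case False
          then obtain c where c: "e = {v, c}" "c \<in> C" using e(1) unfolding N_def by blast
          then have "c \<noteq> v" using vC by blast
          then have "c \<in> nbhd E w" using e(2) c(1) by blast
          then show ?thesis using A c by blast
        qed
      next
        fix e assume e: "e \<in> {e\<in>E. e \<subseteq> nbhd E w} \<union> (\<lambda>c. {v, c}) ` (C - {w})"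
        show "e \<in> {e\<in>E'. e \<subseteq> insert v (nbhd E w)}"
        proof (cases "e \<in> E")
          case True
          then have "v \<notin> e" using eV vV by blast
          then have "e \<notin> (\<lambda>c. {v, c}) ` (C - {w})" by blast
          then show ?thesis using e True unfolding E'_def by blast
        next
          case False
          then obtain c where c: "e = {v, c}" "c \<in> C - {w}" using e by blast
          then have "e \<in> N" unfolding N_def by blast
          moreover have "c \<in> nbhd E w" using A c by blast
          ultimately show ?thesis using c unfolding E'_def by blast
        qed
      qed
    qed
    have disj: "{e\<in>E. e \<subseteq> nbhd E w} \<inter> (\<lambda>c. {v, c}) ` (C - {w}) = {}"
      using eV vV by auto
    have inj: "inj_on (\<lambda>c. {v, c}) (C - {w})"
      by (auto simp: inj_on_def doubleton_eq_iff)
    have fin1: "finite {e\<in>E. e \<subseteq> nbhd E w}" using fE by simp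
    have "card {e\<in>E'. e \<subseteq> nbhd E' w} = card {e\<in>E. e \<subseteq> nbhd E w} + (k - 1)"
      unfolding eq using card_Un_disjoint[OF fin1 _ disj] card_image[OF inj] fC cC wC by simp
    moreover have h: "2 * card {e\<in>E. e \<subseteq> nbhd E w} = (k - 1) * (2 * card (nbhd E w) - k)"
      and h2: "k \<le> card (nbhd E w) + 1" using loc wV by auto
    ultimately have "2 * card {e\<in>E'. e \<subseteq> nbhd E' w} = (k - 1) * (2 * card (nbhd E w) - k) + 2 * (k - 1)"
      by simp
    also have "\<dots> = (k - 1) * (2 * card (nbhd E w) - k + 2)" by (simp add: algebra_simps)
    also have "2 * card (nbhd E w) - k + 2 = 2 * card (nbhd E' w) - k"
      using dC[OF wC] h2 k2 by simp
    finally show ?thesis .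
  qed
  have cntO: "2 * card {e\<in>E'. e \<subseteq> nbhd E' w} = (k - 1) * (2 * card (nbhd E' w) - k)"
    if wV: "w \<in> V" "w \<notin> C" for w
  proof -
    have "w \<noteq> v" using wV vV by blast
    then have n: "nbhd E' w = nbhd E w" using nbO' wV by blast
    have "{e\<in>E'. e \<subseteq> nbhd E' w} = {e\<in>E. e \<subseteq> nbhd E w}"
    proof -
      have "v \<notin> nbhd E w" using nbV vV by blast
      then have "\<forall>e\<in>N. \<not> e \<subseteq> nbhd E w" unfolding N_def by blast
      then show ?thesis unfolding n unfolding E'_def by blast
    qed
    then show ?thesis using n loc wV by simp
  qed
  have degs: "k \<le> card (nbhd E' w) + 1 \<and> (1 \<le> Suc t \<longrightarrow> k \<le> card (nbhd E' w))"
    if wV': "w \<in> insert v V" for w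
  proof (cases "w = v")
    case True then show ?thesis using nbv' cC by simp
  next
    case False
    then have wV: "w \<in> V" using wV' by blast
    show ?thesis
    proof (cases "w \<in> C")
      case True then show ?thesis using dC loc wV by fastforce
    next
      case wnC: False
      have "t \<noteq> 0"
      proof
        assume "t = 0"
        then have "card C = card V" using cC cV by simp
        then have "C = V" using card_subset_eq[OF fV CV] by simp
        then show False using wnC wV by blast
      qed
      then show ?thesis using loc wV nbO'[OF wnC False] by simp
    qed
  qed
  have sum': "(\<Sum>u\<in>insert v V. card (nbhd E' u)) = k * (k - 1) + 2 * k * Suc t"
  proof -
    have "(\<Sum>u\<in>insert v V. card (nbhd E' u)) = k + (\<Sum>u\<in>V. card (nbhd E' u))"
      using fV vV nbv' cC by simp
    also have "(\<Sum>u\<in>V. card (nbhd E' u)) = (\<Sum>u\<in>V. card (nbhd E u) + (if u \<in> C then 1 else 0))"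
    proof (rule sum.cong)
      fix u assume "u \<in> V"
      then show "card (nbhd E' u) = card (nbhd E u) + (if u \<in> C then 1 else 0)"
      proof (cases "u \<in> C")
        case False
        have "u \<noteq> v" using \<open>u \<in> V\<close> vV by blast
        then show ?thesis using nbO'[OF False] False by simp
      qed (use dC in simp)
    qed simp
    also have "\<dots> = (\<Sum>u\<in>V. card (nbhd E u)) + card C"
      using fV CV by (simp add: sum.distrib sum.If_cases Int_absorb1)
    finally have "(\<Sum>u\<in>insert v V. card (nbhd E' u)) = k + ((k * (k - 1) + 2 * k * t) + k)"
      using sm cC by simp
    moreover have "k + ((k * (k - 1) + 2 * k * t) + k) = k * (k - 1) + 2 * k * Suc t" by simp
    ultimately show ?thesis by simp
  qed
  have loc': "\<forall>u\<in>insert v V. 2 * card {e\<in>E'. e \<subseteq> nbhd E' u} = (k - 1) * (2 * card (nbhd E' u) - k)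
       \<and> k \<le> card (nbhd E' u) + 1 \<and> (1 \<le> Suc t \<longrightarrow> k \<le> card (nbhd E' u))"
    using cntv cntC cntO degs by blast
  show ?thesis
    unfolding INV_def E'_def[symmetric] N_def[symmetric]
    using fV cV vV eV' loc' sum' by simp
qed

lemma ktree_inv: "ktree k t V E \<Longrightarrow> k \<ge> 2 \<Longrightarrow> INV k t V E"
  by (induction rule: ktree.induct) (auto intro: base_inv step_inv)
lemma key:
  fixes K D :: real
  assumes "K \<ge> 2" "D \<ge> K"
  shows "1/2 + (2*K - D)/(4*K) \<le> ((K-1)*(2*D-K)/2) / (D*(D-1)/2)"
proof -
  define Q where "Q = D*(D-1)"
  have P: "0 \<le> (D-2*K)^2*(D-1) + 4*K*(K-2)*(D-K)" using assms by simp
  have id: "(D-2*K)^2*(D-1) + 4*K*(K-2)*(D-K) = 4*K*(K-1)*(2*D-K) - 2*K*Q - (2*K-D)*Q"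
    unfolding Q_def by (simp add: algebra_simps power2_eq_square)
  have pos: "0 < Q" "0 < K" using assms unfolding Q_def by auto
  have "1/2 + (2*K - D)/(4*K) = (2*K*Q + (2*K-D)*Q) / (4*K*Q)"
    using pos by (simp add: field_simps)
  also have "\<dots> \<le> (4*K*(K-1)*(2*D-K)) / (4*K*Q)"
    using P id pos by (intro divide_right_mono) auto
  also have "\<dots> = ((K-1)*(2*D-K)/2) / (Q/2)"
    using pos by (simp add: field_simps)
  finally show ?thesis unfolding Q_def .
qed

lemma term_bound:
  assumes k2: "k \<ge> 2" and d: "k \<le> d" and c: "2 * c = (k - 1) * (2 * d - k)"
  shows "1/2 + (2 * real k - real d) / (4 * real k) \<le> real c / real (d choose 2)"
proof -
  have "real (2 * c) = real ((k - 1) * (2 * d - k))" using c by simp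
  then have rc: "real c = (real k - 1) * (2 * real d - real k) / 2"
    using k2 d by (simp add: of_nat_diff)
  have "real (2 * (d choose 2)) = real (d * (d - 1))" by (simp only: two_choose2)
  then have rd: "real (d choose 2) = real d * (real d - 1) / 2"
    using k2 d by (simp add: of_nat_diff)
  show ?thesis unfolding rc rd
    by (rule key) (use k2 d in auto)
qed

theorem proposition4:
  fixes k n :: nat and V :: "nat set" and E :: "nat set set"
  assumes "k \<ge> 2" and "n \<ge> 1" and "ktree k n V E"
  shows "clustering_coeff V E \<ge> 1 / 2"
proof -
  have I: "INV k n V E" using ktree_inv assms by blast
  then have fV: "finite V" and cV: "card V = k + n"
    and loc: "\<forall>u\<in>V. 2 * card {e\<in>E. e \<subseteq> nbhd E u} = (k - 1) * (2 * card (nbhd E u) - k)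
       \<and> k \<le> card (nbhd E u) + 1 \<and> (1 \<le> n \<longrightarrow> k \<le> card (nbhd E u))"
    and sm: "(\<Sum>u\<in>V. card (nbhd E u)) = k * (k - 1) + 2 * k * n"
    unfolding INV_def by auto
  let ?f = "\<lambda>u. real (card {e \<in> E. e \<subseteq> nbhd E u}) / real (card (nbhd E u) choose 2)"
  let ?g = "\<lambda>u. 1/2 + (2 * real k - real (card (nbhd E u))) / (4 * real k)"
  have le: "sum ?g V \<le> sum ?f V"
    by (rule sum_mono) (use loc assms(1,2) in \<open>auto intro!: term_bound\<close>)
  have smr: "(\<Sum>u\<in>V. real (card (nbhd E u))) = real k * (real k - 1) + 2 * real k * real n"
  proof -
    have "(\<Sum>u\<in>V. real (card (nbhd E u))) = real (k * (k - 1) + 2 * k * n)"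
      by (simp only: of_nat_sum[symmetric] sm)
    then show ?thesis using assms(1) by (simp add: of_nat_diff)
  qed
  have kp: "real k > 0" using assms(1) by simp
  have "sum ?g V = real (card V) / 2 + (2 * real k * real (card V) - (\<Sum>u\<in>V. real (card (nbhd E u)))) / (4 * real k)"
    by (simp add: sum.distrib sum_divide_distrib[symmetric] sum_subtractf)
  also have "\<dots> = real (card V) / 2 + (real k * real k + real k) / (4 * real k)"
    unfolding smr cV by (simp add: algebra_simps)
  also have "\<dots> \<ge> real (card V) / 2" using kp by (simp add: divide_nonneg_pos)
  finally have "real (card V) / 2 \<le> sum ?f V" using le by linarith
  moreover have "real (card V) > 0" using cV assms(1) by simp
  ultimately show ?thesis unfolding clustering_coeff_def
    by (simp add: field_simps)
qed

end
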